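(* In the model with two recommendation thresholds $0<R_1\le R_2<1$, suppose $F$ is symmetric ($F(-i)=1-F(i)$ for all $i$), and let $\sigma=q_H/q_L$. Then the value $V(R_1,R_2)$ of the recommendation system is (i) decreasing in $R_1$ if $\sigma<1$, and (ii) increasing in $R_2$ if $\sigma>1$.
   Context: Setting. Consumer types are $i\in[-1/2,1/2]$, distributed according to a continuous cumulative distribution function $F$ with full support on $[-1/2,1/2]$. A product has a quality vector $(Q_1,Q_2)\in\{0,1\}^2$; a type-$i$ consumer gets payoff $(1/2+i)Q_1+(1/2-i)Q_2$ from it. The versions $(1,1),(1,0),(0,1),(0,0)$ have prior probabilities $q_H,q_1,q_2,q_L$ respectively, all strictly positive and summing to $1$. One product carries a recommendation from a sender whose type is drawn from $F$ independently of the product. Given thresholds $0<R_1\le R_2<1$, the sender gives a buy recommendation $B$ if her payoff from the product is at least $R_2$, a don't-buy recommendation $D$ if it is below $R_1$, and a neutral recommendation $N$ if it lies in $[R_1,R_2)$. For $r\in\{B,N,D\}$, let $\pi^r$ be the probability of recommendation $r$ and $(p_H^r,p_1^r,p_2^r,p_L^r)$ the Bayesian posterior over $(1,1),(1,0),(0,1),(0,0)$ given $r$ (when $\pi^r>0$). Let $U_i^r=p_H^r+(1/2+i)p_1^r+(1/2-i)p_2^r$ and $U_i^0=q_H+(1/2+i)q_1+(1/2-i)q_2$ (expected payoff from an unrecommended alternative). The value of the recommendation system is $V(R_1,R_2)=\sum_{r\in\{B,N,D\}:\,\pi^r>0}\pi^r\int_{-1/2}^{1/2}\max\{U_i^r-U_i^0,0\}\,dF(i)$,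 the expected payoff gain of a receiver drawn from $F$ who, after each recommendation, optimally chooses between the recommended product and an alternative. *)

theory Defs
  imports "HOL-Analysis.Analysis"
begin

text \<open>A product version is a quality vector (Q1,Q2) in {0,1}^2,
  encoded as a pair of booleans. The type distribution is given by its CDF F on the reals
  (F = 0 below -1/2, F = 1 above 1/2); the corresponding probability measure is
  interval_measure F.\<close>

datatype recom = B | N | D

definition type_measure :: "(real \<Rightarrow> real) \<Rightarrow> real measure" where
  "type_measure F = interval_measure F"

definition payoff :: "real \<Rightarrow> bool \<times> bool \<Rightarrow> real" where
  "payoff i v = (1/2 + i) * of_bool (fst v) + (1/2 - i) * of_bool (snd v)"

definition prior :: "real \<Rightarrow> real \<Rightarrow> real \<Rightarrow> real \<Rightarrow> bool \<times> bool \<Rightarrow> real" where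
  "prior qH q1 q2 qL v =
     (case v of (True, True) \<Rightarrow> qH | (True, False) \<Rightarrow> q1 | (False, True) \<Rightarrow> q2 | (False, False) \<Rightarrow> qL)"

definition recommend :: "real \<Rightarrow> real \<Rightarrow> real \<Rightarrow> recom" where
  "recommend R1 R2 x = (if R2 \<le> x then B else if x < R1 then D else N)"

definition rec_lik :: "(real \<Rightarrow> real) \<Rightarrow> real \<Rightarrow> real \<Rightarrow> recom \<Rightarrow> bool \<times> bool \<Rightarrow> real" where
  "rec_lik F R1 R2 r v =
     measure (type_measure F) {s \<in> {-1/2..1/2}. recommend R1 R2 (payoff s v) = r}"

definition rec_prob :: "(real \<Rightarrow> real) \<Rightarrow> real \<Rightarrow> real \<Rightarrow> real \<Rightarrow> real \<Rightarrow> real \<Rightarrow> real \<Rightarrow> recom \<Rightarrow> real" where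
  "rec_prob F qH q1 q2 qL R1 R2 r = (\<Sum>v\<in>UNIV. prior qH q1 q2 qL v * rec_lik F R1 R2 r v)"

definition posterior :: "(real \<Rightarrow> real) \<Rightarrow> real \<Rightarrow> real \<Rightarrow> real \<Rightarrow> real \<Rightarrow> real \<Rightarrow> real \<Rightarrow> recom \<Rightarrow> bool \<times> bool \<Rightarrow> real" where
  "posterior F qH q1 q2 qL R1 R2 r v =
     prior qH q1 q2 qL v * rec_lik F R1 R2 r v / rec_prob F qH q1 q2 qL R1 R2 r"

definition U_rec :: "(real \<Rightarrow> real) \<Rightarrow> real \<Rightarrow> real \<Rightarrow> real \<Rightarrow> real \<Rightarrow> real \<Rightarrow> real \<Rightarrow> recom \<Rightarrow> real \<Rightarrow> real" where
  "U_rec F qH q1 q2 qL R1 R2 r i =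
     posterior F qH q1 q2 qL R1 R2 r (True, True)
     + (1/2 + i) * posterior F qH q1 q2 qL R1 R2 r (True, False)
     + (1/2 - i) * posterior F qH q1 q2 qL R1 R2 r (False, True)"

definition U0 :: "real \<Rightarrow> real \<Rightarrow> real \<Rightarrow> real \<Rightarrow> real" where
  "U0 qH q1 q2 i = qH + (1/2 + i) * q1 + (1/2 - i) * q2"

definition value_rec :: "(real \<Rightarrow> real) \<Rightarrow> real \<Rightarrow> real \<Rightarrow> real \<Rightarrow> real \<Rightarrow> real \<Rightarrow> real \<Rightarrow> real" where
  "value_rec F qH q1 q2 qL R1 R2 =
     (\<Sum>r\<in>{B, N, D}.
        if rec_prob F qH q1 q2 qL R1 R2 r > 0 then
          rec_prob F qH q1 q2 qL R1 R2 r *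
          (LINT i:{-1/2..1/2}|type_measure F.
              max (U_rec F qH q1 q2 qL R1 R2 r i - U0 qH q1 q2 i) 0)
        else 0)"

end

theory Submission
  imports Defs "HOL-Probability.Distribution_Functions"
begin

definition ww :: "real \<Rightarrow> real \<Rightarrow> real \<Rightarrow> real" where
  "ww q1 q2 i = (1/2 + i) * q1 + (1/2 - i) * q2"
definition hh :: "real \<Rightarrow> real \<Rightarrow> real \<Rightarrow> real \<Rightarrow> real" where
  "hh qH q1 q2 i = ww q1 q2 i * (1 - (q1 + q2)) - (q1 + q2) * qH"
definition Bx :: "real \<Rightarrow> real \<Rightarrow> real \<Rightarrow> real \<Rightarrow> real \<Rightarrow> real" where
  "Bx qH q1 q2 a i = qH * (1 - qH - a * (q1 + q2)) + ww q1 q2 i * (a * (1 - (q1 + q2)) - qH)"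

lemma UNIV_bb: "(UNIV :: (bool \<times> bool) set) = {(True,True),(True,False),(False,True),(False,False)}"
  by auto

lemma sum_bb: "(\<Sum>v\<in>UNIV. f v) = f (True,True) + f (True,False) + f (False,True) + (f (False,False) :: real)"
  unfolding UNIV_bb by simp


lemma sum3: "(\<Sum>r\<in>{B,N,D}. g r) = g B + g N + (g D :: real)" by simp

lemma pmax: "(p::real) > 0 \<Longrightarrow> p * max x 0 = max (p*x) 0"
  by (cases "x \<le> 0") (auto simp: max_def mult_le_0_iff)

lemma ww_bounds:
  assumes "i \<in> {-1/2..1/2}" "q1 > 0" "q2 > 0"
  shows "ww q1 q2 i \<ge> 0" "ww q1 q2 i \<le> q1 + q2"
proof -
  have a: "1/2 + i \<ge> 0" "1/2 - i \<ge> 0" using assms by auto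
  have "(1/2+i)*q1 \<ge> 0" "(1/2-i)*q2 \<ge> 0" using a assms by simp_all
  then show "ww q1 q2 i \<ge> 0" unfolding ww_def by linarith
  have "q1 + q2 - ww q1 q2 i = (1/2 - i)*q1 + (1/2+i)*q2" unfolding ww_def by algebra
  also have "\<dots> \<ge> 0" using a assms by (simp add: add_nonneg_nonneg)
  finally show "ww q1 q2 i \<le> q1 + q2" by simp
qed

lemma Bx_pos:
  assumes "i \<in> {-1/2..1/2}" "qH > 0" "q1 > 0" "q2 > 0" "qL > 0" "qH + q1 + q2 + qL = 1"
    "0 \<le> a" "a \<le> 1"
  shows "Bx qH q1 q2 a i > 0"
proof -
  have e: "Bx qH q1 q2 a i = qH*qL + a*ww q1 q2 i*qL + (1-a)*qH*(q1+q2 - ww q1 q2 i)"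
    using assms(6) unfolding Bx_def by algebra
  have "a*ww q1 q2 i*qL \<ge> 0" using ww_bounds[OF assms(1,3,4)] assms by simp
  moreover have "(1-a)*qH*(q1+q2 - ww q1 q2 i) \<ge> 0" using ww_bounds[OF assms(1,3,4)] assms by simp
  moreover have "qH*qL > 0" using assms by simp
  ultimately show ?thesis unfolding e by linarith
qed

lemma ptB:
  assumes "p = qH + (q1+q2)*a" "p > 0" "U = qH/p + (1/2+i)*(q1*a/p) + (1/2-i)*(q2*a/p)"
    "Bx qH q1 q2 a i > 0"
  shows "p * max (U - U0 qH q1 q2 i) 0 = Bx qH q1 q2 a i"
proof -
  have "U = (qH + a * ww q1 q2 i) / p" unfolding assms(3) ww_def using assms(2) by (simp add: field_simps)
  then have "p * U = qH + a * ww q1 q2 i" using assms(2) by simp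
  then have "p * (U - U0 qH q1 q2 i) = Bx qH q1 q2 a i"
    using assms(1) unfolding Bx_def U0_def ww_def by (simp add: algebra_simps)
  moreover have "p * max (U - U0 qH q1 q2 i) 0 = max (p * (U - U0 qH q1 q2 i)) 0"
    using assms(2) by (rule pmax)
  ultimately show ?thesis using assms(4) by simp
qed

lemma ptN:
  assumes "p = (q1+q2)*n" "p > 0" "n > 0" "U = 0/p + (1/2+i)*(q1*n/p) + (1/2-i)*(q2*n/p)"
  shows "p * max (U - U0 qH q1 q2 i) 0 = n * max (hh qH q1 q2 i) 0"
proof -
  have "U = (n * ww q1 q2 i) / p" unfolding assms(4) ww_def using assms(2) by (simp add: field_simps)
  then have "p * U = n * ww q1 q2 i" using assms(2) by simp
  then have "p * (U - U0 qH q1 q2 i) = n * hh qH q1 q2 i"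
    using assms(1) \<open>p * U = n * ww q1 q2 i\<close> unfolding hh_def U0_def ww_def by algebra
  moreover have "p * max (U - U0 qH q1 q2 i) 0 = max (p * (U - U0 qH q1 q2 i)) 0"
    using assms(2) by (rule pmax)
  moreover have "max (n * hh qH q1 q2 i) 0 = n * max (hh qH q1 q2 i) 0"
    using assms(3) by (rule pmax[symmetric])
  ultimately show ?thesis by simp
qed

lemma ptD:
  assumes "i \<in> {-1/2..1/2}" "qH > 0" "q1 > 0" "q2 > 0" "qL > 0" "qH + q1 + q2 + qL = 1"
    "0 \<le> d" "d \<le> 1"
    "p = qL + (q1+q2)*d" "U = (1/2+i)*(q1*d/p) + (1/2-i)*(q2*d/p) + 0/p"
  shows "max (U - U0 qH q1 q2 i) 0 = 0"
proof -
  have pp: "p > 0" using assms by (simp add: add_pos_nonneg)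
  have "U = (d * ww q1 q2 i) / p" unfolding assms(10) ww_def using pp by (simp add: field_simps)
  then have "p * U = d * ww q1 q2 i" using pp by simp
  moreover have "p * (qH + ww q1 q2 i) - d * ww q1 q2 i
     = qL*qH + qL*ww q1 q2 i*(1-d) + d*qH*(q1+q2 - ww q1 q2 i)"
    using assms(6,9) by algebra
  moreover have "qL*ww q1 q2 i*(1-d) \<ge> 0" "d*qH*(q1+q2 - ww q1 q2 i) \<ge> 0" "qL*qH \<ge> 0"
    using ww_bounds[OF assms(1,3,4)] assms by auto
  ultimately have "p * U \<le> p * U0 qH q1 q2 i" unfolding U0_def ww_def by (simp add: algebra_simps)
  then have "U \<le> U0 qH q1 q2 i" using pp by (simp add: mult_le_cancel_left)
  then show ?thesis by simp
qed


context
  fixes F :: "real \<Rightarrow> real"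
  assumes F_mono: "mono F"
    and F_cont: "continuous_on UNIV F"
    and F_low: "\<And>x. x \<le> -1/2 \<Longrightarrow> F x = 0"
    and F_high: "\<And>x. 1/2 \<le> x \<Longrightarrow> F x = 1"
    and F_full_support: "strict_mono_on {-1/2..1/2} F"
    and F_symm: "\<And>i. i \<in> {-1/2..1/2} \<Longrightarrow> F (-i) = 1 - F i"
begin

lemma Fm: "x \<le> y \<Longrightarrow> F x \<le> F y"
  using F_mono by (simp add: monoD)

lemma Frc: "continuous (at_right a) F"
  using F_cont by (metis continuous_on_eq_continuous_within continuous_within_subset iso_tuple_UNIV_I subset_UNIV)

lemma prob: "prob_space (type_measure F)"
proof -
  have "real_distribution (interval_measure F)"
  proof (rule real_distribution_interval_measure)
    show "x \<le> y \<Longrightarrow> F x \<le> F y" for x y by (rule Fm)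
    show "continuous (at_right a) F" for a by (rule Frc)
    show "(F \<longlongrightarrow> 0) at_bot"
      by (rule tendsto_eventually) (auto simp: eventually_at_bot_linorder intro!: exI[of _ "-1"] F_low)
    show "(F \<longlongrightarrow> 1) at_top"
      by (rule tendsto_eventually) (auto simp: eventually_at_top_linorder intro!: exI[of _ "1"] F_high)
  qed
  then show ?thesis unfolding type_measure_def by (simp add: real_distribution_def)
qed

lemma meas_Icc: "x \<le> y \<Longrightarrow> measure (type_measure F) {x..y} = F y - F x"
  unfolding type_measure_def measure_def
  using emeasure_interval_measure_Icc[of x y F, OF _ Fm F_cont] Fm[of x y] by simp

lemma meas_between:
  assumes "A \<in> sets borel" "{x<..<y} \<subseteq> A" "A \<subseteq> {x..y}" "x \<le> y"
  shows "measure (type_measure F) A = F y - F x"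
proof -
  interpret P: prob_space "type_measure F" by (rule prob)
  have sb: "sets (type_measure F) = sets borel" by (simp add: type_measure_def)
  have "measure (type_measure F) A \<le> measure (type_measure F) {x..y}"
    using assms by (intro P.finite_measure_mono) (auto simp: sb)
  moreover have "measure (type_measure F) {x..y} \<le> measure (type_measure F) A"
  proof -
    have "{x..y} \<subseteq> {x..x} \<union> (A \<union> {y..y})"
    proof
      fix z assume z: "z \<in> {x..y}"
      show "z \<in> {x..x} \<union> (A \<union> {y..y})"
        by (cases "z = x"; cases "z = y") (use assms(2) z in auto)
    qed
    then have "measure (type_measure F) {x..y} \<le> measure (type_measure F) ({x..x} \<union> (A \<union> {y..y}))"
      using assms by (intro P.finite_measure_mono) (auto simp: sb)
    also have "\<dots> \<le> measure (type_measure F) {x..x} + measure (type_measure F) (A \<union> {y..y})"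
      using assms by (intro measure_subadditive) (auto simp: sb P.emeasure_finite)
    also have "\<dots> \<le> measure (type_measure F) {x..x} + (measure (type_measure F) A + measure (type_measure F) {y..y})"
      using assms by (intro add_left_mono measure_subadditive) (auto simp: sb P.emeasure_finite)
    also have "\<dots> = measure (type_measure F) A" using meas_Icc[of x x] meas_Icc[of y y] by simp
    finally show ?thesis .
  qed
  ultimately show ?thesis using meas_Icc[OF assms(4)] by simp
qed

lemma sint:
  assumes "continuous_on UNIV f"
  shows "set_integrable (type_measure F) {-1/2..1/2} (f :: real \<Rightarrow> real)"
proof -
  interpret P: prob_space "type_measure F" by (rule prob)
  have "compact (f ` {-1/2..1/2})"
    by (rule compact_continuous_image) (auto intro: continuous_on_subset[OF assms])
  then obtain B where B: "\<And>x. x \<in> {-1/2..1/2} \<Longrightarrow> norm (f x) \<le> B"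
    using compact_imp_bounded bounded_iff by (metis image_eqI)
  have m: "f \<in> borel_measurable (type_measure F)"
    using borel_measurable_continuous_onI[OF assms]
    by (simp add: measurable_cong_sets[OF sets_interval_measure refl] type_measure_def)
  show ?thesis unfolding set_integrable_def
  proof (rule P.integrable_const_bound[where B="max B 0"])
    show "AE x in type_measure F. norm (indicator {-1/2..1/2} x *\<^sub>R f x) \<le> max B 0"
      using B by (intro AE_I2) (force simp: indicator_def)
    show "(\<lambda>x. indicator {-1/2..1/2} x *\<^sub>R f x) \<in> borel_measurable (type_measure F)"
      using m by (intro borel_measurable_scaleR) (auto simp: type_measure_def)
  qed
qed


lemma Fh: "F (1/2) = 1" and Fl: "F (-1/2) = 0" using F_high F_low by auto


lemma sp: "space (type_measure F) = UNIV" by (simp add: type_measure_def)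

lemma pos_int:
  assumes g: "continuous_on UNIV g" and nn: "\<And>i. i \<in> {-1/2..1/2} \<Longrightarrow> g i \<ge> 0"
    and xy: "-1/2 \<le> x" "x < y" "y \<le> 1/2" and e: "(\<epsilon>::real) > 0"
    and ge: "\<And>i. i \<in> {x..y} \<Longrightarrow> g i \<ge> \<epsilon>"
  shows "(LINT i:{-1/2..1/2}|type_measure F. g i) > 0"
proof -
  interpret P: prob_space "type_measure F" by (rule prob)
  have Tm: "{x..y} \<in> sets (type_measure F)" by (simp add: type_measure_def)
  have eq: "(\<lambda>i. indicator {-1/2..1/2} i *\<^sub>R (\<epsilon> * indicator {x..y} i)) = (\<lambda>i. \<epsilon> * indicator {x..y} i :: real)"
    using xy by (auto simp: indicator_def fun_eq_iff)
  have si: "set_integrable (type_measure F) {-1/2..1/2} (\<lambda>i. \<epsilon> * indicator {x..y} i :: real)"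
    unfolding set_integrable_def eq using Tm by (intro integrable_mult_right integrable_real_indicator) (auto simp: P.emeasure_finite less_top[symmetric])
  have v: "(LINT i:{-1/2..1/2}|type_measure F. \<epsilon> * indicator {x..y} i) = \<epsilon> * (F y - F x)"
    unfolding set_lebesgue_integral_def eq using meas_Icc[of x y] xy by (simp add: sp)
  have "F x < F y" using F_full_support xy by (auto intro: strict_mono_onD)
  then have "0 < (LINT i:{-1/2..1/2}|type_measure F. \<epsilon> * indicator {x..y} i)" unfolding v using e by simp
  also have "\<dots> \<le> (LINT i:{-1/2..1/2}|type_measure F. g i)"
  proof (rule set_integral_mono[OF si sint[OF g]])
    fix i :: real assume "i \<in> {-1/2..1/2}"
    then show "\<epsilon> * indicator {x..y} i \<le> g i" using nn ge e by (auto simp: indicator_def)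
  qed
  finally show ?thesis .
qed

lemma cont_hh: "continuous_on UNIV (\<lambda>i. hh qH q1 q2 i)"
  unfolding hh_def ww_def by (intro continuous_intros)

lemma hh_ge:
  assumes "ww q1 q2 i \<ge> (q1+q2)/2" "qH + q1 + q2 + qL = 1" "qH > 0" "qL > 0"
  shows "hh qH q1 q2 i \<ge> (q1+q2)*(qL-qH)/2"
proof -
  have "ww q1 q2 i * (1 - (q1+q2)) \<ge> (q1+q2)/2 * (1 - (q1+q2))"
    using assms by (intro mult_right_mono) auto
  moreover have "(q1+q2)/2 * (1 - (q1+q2)) - (q1+q2)*qH = (q1+q2)*(qL-qH)/2" using assms(2) by algebra
  ultimately show ?thesis unfolding hh_def by linarith
qed

lemma hh_le:
  assumes "ww q1 q2 i \<le> (q1+q2)/2" "qH + q1 + q2 + qL = 1" "qH > 0" "qL > 0"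
  shows "- hh qH q1 q2 i \<ge> (q1+q2)*(qH-qL)/2"
proof -
  have "ww q1 q2 i * (1 - (q1+q2)) \<le> (q1+q2)/2 * (1 - (q1+q2))"
    using assms by (intro mult_right_mono) auto
  moreover have "(q1+q2)/2 * (1 - (q1+q2)) - (q1+q2)*qH = (q1+q2)*(qL-qH)/2" using assms(2) by algebra
  moreover have "(q1+q2)*(qH-qL)/2 = -((q1+q2)*(qL-qH)/2)" by (simp add: field_simps)
  ultimately show ?thesis unfolding hh_def by linarith
qed

lemma ww_alt: "ww q1 q2 i = (q1+q2)/2 + i*(q1-q2)" unfolding ww_def by (simp add: field_simps)

lemma posK:
  assumes q_pos: "qH > 0" "q1 > 0" "q2 > 0" "qL > 0" and q_sum: "qH + q1 + q2 + qL = 1"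
    and lt: "qH < qL"
  shows "(LINT i:{-1/2..1/2}|type_measure F. max (hh qH q1 q2 i) 0) > 0"
proof -
  have c: "continuous_on UNIV (\<lambda>i. max (hh qH q1 q2 i) 0)" using cont_hh by (intro continuous_intros)
  have e: "(q1+q2)*(qL-qH)/2 > 0" using q_pos lt by simp
  show ?thesis
  proof (cases "q1 \<ge> q2")
    case True
    show ?thesis
    proof (rule pos_int[OF c _ _ _ _ e])
      fix i :: real assume "i \<in> {0..1/2}"
      then have "i*(q1-q2) \<ge> 0" using True by simp
      then have "ww q1 q2 i \<ge> (q1+q2)/2" using ww_alt[of q1 q2 i] by linarith
      then show "max (hh qH q1 q2 i) 0 \<ge> (q1+q2)*(qL-qH)/2" using hh_ge q_sum q_pos by fastforce
    qed auto
  next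
    case False
    show ?thesis
    proof (rule pos_int[OF c _ _ _ _ e])
      fix i :: real assume "i \<in> {-1/2..0}"
      then have "i*(q1-q2) \<ge> 0" using False by (simp add: mult_nonpos_nonpos)
      then have "ww q1 q2 i \<ge> (q1+q2)/2" using ww_alt[of q1 q2 i] by linarith
      then show "max (hh qH q1 q2 i) 0 \<ge> (q1+q2)*(qL-qH)/2" using hh_ge q_sum q_pos by fastforce
    qed auto
  qed
qed

lemma posM:
  assumes q_pos: "qH > 0" "q1 > 0" "q2 > 0" "qL > 0" and q_sum: "qH + q1 + q2 + qL = 1"
    and lt: "qL < qH"
  shows "(LINT i:{-1/2..1/2}|type_measure F. max (- hh qH q1 q2 i) 0) > 0"
proof -
  have c: "continuous_on UNIV (\<lambda>i. max (- hh qH q1 q2 i) 0)" using cont_hh by (intro continuous_intros)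
  have e: "(q1+q2)*(qH-qL)/2 > 0" using q_pos lt by simp
  show ?thesis
  proof (cases "q1 \<ge> q2")
    case True
    show ?thesis
    proof (rule pos_int[OF c _ _ _ _ e])
      fix i :: real assume "i \<in> {-1/2..0}"
      then have "i*(q1-q2) \<le> 0" using True by (simp add: mult_nonpos_nonneg)
      then have "ww q1 q2 i \<le> (q1+q2)/2" using ww_alt[of q1 q2 i] by linarith
      then show "max (- hh qH q1 q2 i) 0 \<ge> (q1+q2)*(qH-qL)/2" using hh_le q_sum q_pos by fastforce
    qed auto
  next
    case False
    show ?thesis
    proof (rule pos_int[OF c _ _ _ _ e])
      fix i :: real assume "i \<in> {0..1/2}"
      then have "i*(q1-q2) \<le> 0" using False by (simp add: mult_nonneg_nonpos)
      then have "ww q1 q2 i \<le> (q1+q2)/2" using ww_alt[of q1 q2 i] by linarith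
      then show "max (- hh qH q1 q2 i) 0 \<ge> (q1+q2)*(qH-qL)/2" using hh_le q_sum q_pos by fastforce
    qed auto
  qed
qed

context
  fixes R1 R2 :: real
  assumes R: "0 < R1" "R1 \<le> R2" "R2 < 1"
begin

lemma lik_TT: "rec_lik F R1 R2 r (True,True) = (if r = B then 1 else 0)"
proof -
  have e: "{s \<in> {-1/2..1/2}. recommend R1 R2 (payoff s (True,True)) = r} = (if r = B then {-1/2..1/2} else {})"
    using R by (auto simp: recommend_def payoff_def)
  show ?thesis unfolding rec_lik_def e using meas_Icc[of "-1/2" "1/2"] Fh Fl by simp
qed

lemma lik_FF: "rec_lik F R1 R2 r (False,False) = (if r = D then 1 else 0)"
proof -
  have e: "{s \<in> {-1/2..1/2}. recommend R1 R2 (payoff s (False,False)) = r} = (if r = D then {-1/2..1/2} else {})"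
    using R by (auto simp: recommend_def payoff_def)
  show ?thesis unfolding rec_lik_def e using meas_Icc[of "-1/2" "1/2"] Fh Fl by simp
qed

lemma lik_TF_B: "rec_lik F R1 R2 B (True,False) = 1 - F (R2 - 1/2)"
proof -
  have e: "{s \<in> {-1/2..1/2}. recommend R1 R2 (payoff s (True,False)) = B} = {R2-1/2..1/2}"
    using R by (auto simp: recommend_def payoff_def)
  show ?thesis unfolding rec_lik_def e using meas_Icc[of "R2-1/2" "1/2"] Fh R by simp
qed

lemma lik_TF_N: "rec_lik F R1 R2 N (True,False) = F (R2 - 1/2) - F (R1 - 1/2)"
proof -
  have e: "{s \<in> {-1/2..1/2}. recommend R1 R2 (payoff s (True,False)) = N} = {R1-1/2..<R2-1/2}"
    using R by (auto simp: recommend_def payoff_def)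
  show ?thesis unfolding rec_lik_def e using R by (intro meas_between) auto
qed

lemma lik_TF_D: "rec_lik F R1 R2 D (True,False) = F (R1 - 1/2)"
proof -
  have e: "{s \<in> {-1/2..1/2}. recommend R1 R2 (payoff s (True,False)) = D} = {-1/2..<R1-1/2}"
    using R by (auto simp: recommend_def payoff_def)
  have "measure (type_measure F) {-1/2..<R1-1/2} = F (R1-1/2) - F (-1/2)"
    using R by (intro meas_between) auto
  then show ?thesis unfolding rec_lik_def e using Fl by simp
qed

lemma symR2: "F (1/2 - R2) = 1 - F (R2 - 1/2)"
  using F_symm[of "R2 - 1/2"] R by simp
lemma symR1: "F (1/2 - R1) = 1 - F (R1 - 1/2)"
  using F_symm[of "R1 - 1/2"] R by simp

lemma lik_FT_B: "rec_lik F R1 R2 B (False,True) = 1 - F (R2 - 1/2)"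
proof -
  have e: "{s \<in> {-1/2..1/2}. recommend R1 R2 (payoff s (False,True)) = B} = {-1/2..1/2-R2}"
    using R by (auto simp: recommend_def payoff_def)
  show ?thesis unfolding rec_lik_def e using meas_Icc[of "-1/2" "1/2-R2"] Fl R symR2 by simp
qed

lemma lik_FT_N: "rec_lik F R1 R2 N (False,True) = F (R2 - 1/2) - F (R1 - 1/2)"
proof -
  have e: "{s \<in> {-1/2..1/2}. recommend R1 R2 (payoff s (False,True)) = N} = {1/2-R2<..1/2-R1}"
    using R by (auto simp: recommend_def payoff_def)
  have "measure (type_measure F) {1/2-R2<..1/2-R1} = F (1/2-R1) - F (1/2-R2)"
    using R by (intro meas_between) auto
  then show ?thesis unfolding rec_lik_def e using symR1 symR2 by simp
qed

lemma lik_FT_D: "rec_lik F R1 R2 D (False,True) = F (R1 - 1/2)"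
proof -
  have e: "{s \<in> {-1/2..1/2}. recommend R1 R2 (payoff s (False,True)) = D} = {1/2-R1<..1/2}"
    using R by (auto simp: recommend_def payoff_def)
  have "measure (type_measure F) {1/2-R1<..1/2} = F (1/2) - F (1/2-R1)"
    using R by (intro meas_between) auto
  then show ?thesis unfolding rec_lik_def e using symR1 Fh by simp
qed


context
  fixes qH q1 q2 qL :: real
  assumes q_pos: "qH > 0" "q1 > 0" "q2 > 0" "qL > 0"
    and q_sum: "qH + q1 + q2 + qL = 1"
begin

lemma Fbounds: "0 \<le> F (R1 - 1/2)" "F (R1 - 1/2) \<le> F (R2 - 1/2)" "F (R2 - 1/2) \<le> 1"
  using Fm[of "-1/2" "R1 - 1/2"] Fm[of "R1 - 1/2" "R2 - 1/2"] Fm[of "R2 - 1/2" "1/2"] Fl Fh R by auto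

lemma pB: "rec_prob F qH q1 q2 qL R1 R2 B = qH + (q1+q2) * (1 - F (R2 - 1/2))"
  unfolding rec_prob_def sum_bb by (simp add: prior_def lik_TT lik_FF lik_TF_B lik_FT_B algebra_simps)
lemma pN: "rec_prob F qH q1 q2 qL R1 R2 N = (q1+q2) * (F (R2 - 1/2) - F (R1 - 1/2))"
  unfolding rec_prob_def sum_bb by (simp add: prior_def lik_TT lik_FF lik_TF_N lik_FT_N algebra_simps)
lemma pD: "rec_prob F qH q1 q2 qL R1 R2 D = qL + (q1+q2) * F (R1 - 1/2)"
  unfolding rec_prob_def sum_bb by (simp add: prior_def lik_TT lik_FF lik_TF_D lik_FT_D algebra_simps)

lemma sS: "{-1/2..1/2} \<in> sets (type_measure F)" by (simp add: type_measure_def)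

lemma value_eq:
  "value_rec F qH q1 q2 qL R1 R2 =
     (LINT i:{-1/2..1/2}|type_measure F. Bx qH q1 q2 (1 - F (R2 - 1/2)) i)
     + (F (R2 - 1/2) - F (R1 - 1/2)) * (LINT i:{-1/2..1/2}|type_measure F. max (hh qH q1 q2 i) 0)"
proof -
  let ?p = "rec_prob F qH q1 q2 qL R1 R2"
  let ?a = "1 - F (R2 - 1/2)"
  let ?n = "F (R2 - 1/2) - F (R1 - 1/2)"
  let ?d = "F (R1 - 1/2)"
  note Fb = Fbounds
  have pBpos: "?p B > 0" unfolding pB using q_pos Fb by (simp add: add_pos_nonneg)
  have tB: "(if ?p B > 0 then ?p B * (LINT i:{-1/2..1/2}|type_measure F.
              max (U_rec F qH q1 q2 qL R1 R2 B i - U0 qH q1 q2 i) 0) else 0)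
           = (LINT i:{-1/2..1/2}|type_measure F. Bx qH q1 q2 ?a i)"
  proof -
    have "?p B * (LINT i:{-1/2..1/2}|type_measure F. max (U_rec F qH q1 q2 qL R1 R2 B i - U0 qH q1 q2 i) 0)
       = (LINT i:{-1/2..1/2}|type_measure F. ?p B * max (U_rec F qH q1 q2 qL R1 R2 B i - U0 qH q1 q2 i) 0)"
      by (rule set_integral_mult_right[symmetric])
    also have "\<dots> = (LINT i:{-1/2..1/2}|type_measure F. Bx qH q1 q2 ?a i)"
    proof (rule set_lebesgue_integral_cong[OF sS], intro allI impI)
      fix i :: real assume i: "i \<in> {-1/2..1/2}"
      show "?p B * max (U_rec F qH q1 q2 qL R1 R2 B i - U0 qH q1 q2 i) 0 = Bx qH q1 q2 ?a i"
      proof (rule ptB[OF pB pBpos])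
        show "U_rec F qH q1 q2 qL R1 R2 B i = qH / ?p B + (1/2+i)*(q1 * ?a / ?p B) + (1/2-i)*(q2 * ?a / ?p B)"
          by (simp add: U_rec_def posterior_def prior_def lik_TT lik_TF_B lik_FT_B)
        show "Bx qH q1 q2 ?a i > 0" using Bx_pos[OF i q_pos q_sum] Fb by simp
      qed
    qed
    finally show ?thesis using pBpos by simp
  qed
  have tN: "(if ?p N > 0 then ?p N * (LINT i:{-1/2..1/2}|type_measure F.
              max (U_rec F qH q1 q2 qL R1 R2 N i - U0 qH q1 q2 i) 0) else 0)
           = ?n * (LINT i:{-1/2..1/2}|type_measure F. max (hh qH q1 q2 i) 0)"
  proof (cases "?n > 0")
    case False
    then have "?n = 0" using Fb by simp
    then show ?thesis unfolding pN by simp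
  next
    case True
    have pNpos: "?p N > 0" unfolding pN using q_pos True by simp
    have "?p N * (LINT i:{-1/2..1/2}|type_measure F. max (U_rec F qH q1 q2 qL R1 R2 N i - U0 qH q1 q2 i) 0)
       = (LINT i:{-1/2..1/2}|type_measure F. ?p N * max (U_rec F qH q1 q2 qL R1 R2 N i - U0 qH q1 q2 i) 0)"
      by (rule set_integral_mult_right[symmetric])
    also have "\<dots> = (LINT i:{-1/2..1/2}|type_measure F. ?n * max (hh qH q1 q2 i) 0)"
    proof (rule set_lebesgue_integral_cong[OF sS], intro allI impI)
      fix i :: real assume i: "i \<in> {-1/2..1/2}"
      show "?p N * max (U_rec F qH q1 q2 qL R1 R2 N i - U0 qH q1 q2 i) 0 = ?n * max (hh qH q1 q2 i) 0"
      proof (rule ptN[OF pN pNpos True])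
        show "U_rec F qH q1 q2 qL R1 R2 N i = 0 / ?p N + (1/2+i)*(q1 * ?n / ?p N) + (1/2-i)*(q2 * ?n / ?p N)"
          by (simp add: U_rec_def posterior_def prior_def lik_TT lik_TF_N lik_FT_N)
      qed
    qed
    also have "\<dots> = ?n * (LINT i:{-1/2..1/2}|type_measure F. max (hh qH q1 q2 i) 0)"
      by (rule set_integral_mult_right)
    finally show ?thesis using pNpos by simp
  qed
  have tD: "(if ?p D > 0 then ?p D * (LINT i:{-1/2..1/2}|type_measure F.
              max (U_rec F qH q1 q2 qL R1 R2 D i - U0 qH q1 q2 i) 0) else 0) = 0"
  proof -
    have "(LINT i:{-1/2..1/2}|type_measure F. max (U_rec F qH q1 q2 qL R1 R2 D i - U0 qH q1 q2 i) 0)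
        = (LINT i:{-1/2..1/2}|type_measure F. 0)"
    proof (rule set_lebesgue_integral_cong[OF sS], intro allI impI)
      fix i :: real assume i: "i \<in> {-1/2..1/2}"
      show "max (U_rec F qH q1 q2 qL R1 R2 D i - U0 qH q1 q2 i) 0 = 0"
      proof (rule ptD[OF i q_pos q_sum _ _ pD])
        show "U_rec F qH q1 q2 qL R1 R2 D i = (1/2+i)*(q1 * ?d / ?p D) + (1/2-i)*(q2 * ?d / ?p D) + 0 / ?p D"
          by (simp add: U_rec_def posterior_def prior_def lik_TT lik_TF_D lik_FT_D)
      qed (use Fb in auto)
    qed
    then show ?thesis by (simp add: set_lebesgue_integral_def)
  qed
  show ?thesis unfolding value_rec_def sum3 tB tN tD by simp
qed

end

end

end

theorem proposition10:
  fixes F :: "real \<Rightarrow> real" and qH q1 q2 qL :: real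
  assumes F_mono: "mono F"
    and F_cont: "continuous_on UNIV F"
    and F_low: "\<And>x. x \<le> -1/2 \<Longrightarrow> F x = 0"
    and F_high: "\<And>x. 1/2 \<le> x \<Longrightarrow> F x = 1"
    and F_full_support: "strict_mono_on {-1/2..1/2} F"
    and F_symm: "\<And>i. i \<in> {-1/2..1/2} \<Longrightarrow> F (-i) = 1 - F i"
    and q_pos: "qH > 0" "q1 > 0" "q2 > 0" "qL > 0"
    and q_sum: "qH + q1 + q2 + qL = 1"
  shows "(qH / qL < 1 \<longrightarrow>
            (\<forall>R1 R1' R2. 0 < R1 \<and> R1 < R1' \<and> R1' \<le> R2 \<and> R2 < 1 \<longrightarrow>
               value_rec F qH q1 q2 qL R1' R2 < value_rec F qH q1 q2 qL R1 R2))
       \<and> (qH / qL > 1 \<longrightarrow>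
            (\<forall>R1 R2 R2'. 0 < R1 \<and> R1 \<le> R2 \<and> R2 < R2' \<and> R2' < 1 \<longrightarrow>
               value_rec F qH q1 q2 qL R1 R2 < value_rec F qH q1 q2 qL R1 R2'))"
proof (intro conjI impI allI)
  note FA = F_mono F_cont F_low F_high F_full_support F_symm
  let ?K = "LINT i:{-1/2..1/2}|type_measure F. max (hh qH q1 q2 i) 0"
  fix R1 R1' R2 :: real
  assume qs: "qH / qL < 1" and r: "0 < R1 \<and> R1 < R1' \<and> R1' \<le> R2 \<and> R2 < 1"
  have lt: "qH < qL" using qs q_pos by (simp add: divide_less_eq)
  have V1: "value_rec F qH q1 q2 qL R1' R2 =
     (LINT i:{-1/2..1/2}|type_measure F. Bx qH q1 q2 (1 - F (R2 - 1/2)) i)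
     + (F (R2 - 1/2) - F (R1' - 1/2)) * ?K"
    by (rule value_eq[OF FA _ _ _ q_pos q_sum]) (use r in auto)
  have V0: "value_rec F qH q1 q2 qL R1 R2 =
     (LINT i:{-1/2..1/2}|type_measure F. Bx qH q1 q2 (1 - F (R2 - 1/2)) i)
     + (F (R2 - 1/2) - F (R1 - 1/2)) * ?K"
    by (rule value_eq[OF FA _ _ _ q_pos q_sum]) (use r in auto)
  have Kp: "?K > 0" by (rule posK[OF FA q_pos q_sum lt])
  have "F (R1 - 1/2) < F (R1' - 1/2)"
    using r by (intro strict_mono_onD[OF F_full_support]) auto
  then have "(F (R2 - 1/2) - F (R1' - 1/2)) * ?K < (F (R2 - 1/2) - F (R1 - 1/2)) * ?K"
    using Kp by (intro mult_strict_right_mono) auto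
  then show "value_rec F qH q1 q2 qL R1' R2 < value_rec F qH q1 q2 qL R1 R2" unfolding V0 V1 by simp
next
  note FA = F_mono F_cont F_low F_high F_full_support F_symm
  let ?K = "LINT i:{-1/2..1/2}|type_measure F. max (hh qH q1 q2 i) 0"
  let ?H = "LINT i:{-1/2..1/2}|type_measure F. hh qH q1 q2 i"
  let ?M = "LINT i:{-1/2..1/2}|type_measure F. max (- hh qH q1 q2 i) 0"
  fix R1 R2 R2' :: real
  assume qs: "qH / qL > 1" and r: "0 < R1 \<and> R1 \<le> R2 \<and> R2 < R2' \<and> R2' < 1"
  have lt: "qL < qH" using qs q_pos by (simp add: less_divide_eq)
  have V1: "value_rec F qH q1 q2 qL R1 R2' =
     (LINT i:{-1/2..1/2}|type_measure F. Bx qH q1 q2 (1 - F (R2' - 1/2)) i)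
     + (F (R2' - 1/2) - F (R1 - 1/2)) * ?K"
    by (rule value_eq[OF FA _ _ _ q_pos q_sum]) (use r in auto)
  have V0: "value_rec F qH q1 q2 qL R1 R2 =
     (LINT i:{-1/2..1/2}|type_measure F. Bx qH q1 q2 (1 - F (R2 - 1/2)) i)
     + (F (R2 - 1/2) - F (R1 - 1/2)) * ?K"
    by (rule value_eq[OF FA _ _ _ q_pos q_sum]) (use r in auto)
  define \<delta> where "\<delta> = F (R2' - 1/2) - F (R2 - 1/2)"
  have dp: "\<delta> > 0" unfolding \<delta>_def
    using r by (auto intro: strict_mono_onD[OF F_full_support])
  have sS: "{-1/2..1/2} \<in> sets (type_measure F)" by (simp add: type_measure_def)
  have cB: "continuous_on UNIV (\<lambda>i. Bx qH q1 q2 a i)" for a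
    unfolding Bx_def ww_def by (intro continuous_intros)
  have cK: "continuous_on UNIV (\<lambda>i. max (hh qH q1 q2 i) 0)"
    using cont_hh[OF FA] by (intro continuous_intros)
  have IB: "(LINT i:{-1/2..1/2}|type_measure F. Bx qH q1 q2 (1 - F (R2' - 1/2)) i)
      - (LINT i:{-1/2..1/2}|type_measure F. Bx qH q1 q2 (1 - F (R2 - 1/2)) i) = - \<delta> * ?H"
  proof -
    have "(LINT i:{-1/2..1/2}|type_measure F. Bx qH q1 q2 (1 - F (R2' - 1/2)) i)
      - (LINT i:{-1/2..1/2}|type_measure F. Bx qH q1 q2 (1 - F (R2 - 1/2)) i)
      = (LINT i:{-1/2..1/2}|type_measure F. Bx qH q1 q2 (1 - F (R2' - 1/2)) i - Bx qH q1 q2 (1 - F (R2 - 1/2)) i)"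
      by (rule set_integral_diff(2)[symmetric, OF sint[OF FA cB] sint[OF FA cB]])
    also have "\<dots> = (LINT i:{-1/2..1/2}|type_measure F. - \<delta> * hh qH q1 q2 i)"
      by (rule set_lebesgue_integral_cong[OF sS]) (auto simp: Bx_def hh_def \<delta>_def algebra_simps)
    also have "\<dots> = - \<delta> * ?H" by (rule set_integral_mult_right)
    finally show ?thesis .
  qed
  have KH: "?K - ?H = ?M"
  proof -
    have "?K - ?H = (LINT i:{-1/2..1/2}|type_measure F. max (hh qH q1 q2 i) 0 - hh qH q1 q2 i)"
      by (rule set_integral_diff(2)[symmetric, OF sint[OF FA cK] sint[OF FA cont_hh[OF FA]]])
    also have "\<dots> = ?M"
      by (rule set_lebesgue_integral_cong[OF sS]) (auto simp: max_def)
    finally show ?thesis .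
  qed
  have Mp: "?M > 0" by (rule posM[OF FA q_pos q_sum lt])
  have "value_rec F qH q1 q2 qL R1 R2' - value_rec F qH q1 q2 qL R1 R2 = \<delta> * (?K - ?H)"
    unfolding V0 V1 using IB unfolding \<delta>_def by (simp add: algebra_simps)
  also have "\<dots> > 0" unfolding KH using dp Mp by simp
  finally show "value_rec F qH q1 q2 qL R1 R2 < value_rec F qH q1 q2 qL R1 R2'" by simp
qed

end
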